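(* Let $r>0$, $n\ge 1$, $f\in C^k(D,\mathbb{R}^n)$ with $k>3$, $D\subset\mathbb{R}^{2n}$ open, $(0,0)\in D$, $f(0,0)=0$. Write $f(x,y)=\mathrm{A}x+\mathrm{B}y+\widehat f(x,y)$ with $\mathrm{A},\mathrm{B}\in\mathcal{M}_{n\times n}(\mathbb{R})$ and $\widehat f$ the nonlinear part, and consider $\dot x(t)=f(x(t),x(t-r))$. Assume that $\det(\lambda \mathrm{I}-\mathrm{A}-e^{-\lambda r}\mathrm{B})=0$ has a pair of simple roots $\pm\omega i$, $\omega>0$ (each with one-dimensional eigenspace), and that all other roots have negative real part. Let $\varphi_1,\varphi_2,\Psi_1,\langle\cdot,\cdot\rangle$, $w_{j,k}$, $f_{j,k}$, $g_{j,k}$ be as in the context, and define the vectors in $\mathbb{C}^n$ \[R_1=-g_{2,1}re^{-\omega ir}\varphi_1(0)+\frac{i}{2\omega}\overline{g}_{1,2}(e^{\omega ir}-e^{-\omega ir})\varphi_2(0)-2g_{1,1}e^{-\omega ir}\int_{-r}^0w_{2,0}(\theta)e^{-\omega i\theta}d\theta-(g_{2,0}+2\overline{g}_{1,1})e^{-\omega ir}\int_{-r}^0w_{1,1}(\theta)e^{-\omega i\theta}d\theta-\overline{g}_{0,2}e^{-\omega ir}\int_{-r}^0w_{0,2}(\theta)e^{-\omega i\theta}d\theta,\] \[R_2=g_{2,1}\varphi_1(0)+\overline{g}_{1,2}\varphi_2(0)-f_{2,1}+2g_{1,1}w_{2,0}(0)+(g_{2,0}+2\overline{g}_{1,1})w_{1,1}(0)+\overline{g}_{0,2}w_{0,2}(0).\]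 Then the (singular) linear system \[(\omega i\mathrm{I}-\mathrm{A}-\mathrm{B}e^{-\omega ir})X=\mathrm{B}R_1-R_2,\qquad X\in\mathbb{C}^n,\] has solutions.
   Context: Eigenfunctions: $\varphi_1(s)=\varphi_1(0)e^{\omega is}$, $\varphi_2(s)=\overline{\varphi_1(s)}=\overline{\varphi_1(0)}e^{-\omega is}$, $s\in[-r,0]$, where the nonzero column vector $\varphi_1(0)$ satisfies $(\omega i\mathrm{I}-\mathrm{A}-e^{-\omega ir}\mathrm{B})\varphi_1(0)=0$. Adjoint eigenvector: a nonzero row vector $\psi_1(0)$ with $\psi_1(0)(-\omega i\mathrm{I}+\mathrm{A}+\mathrm{B}e^{-\omega ir})=0$; set $\Psi_1(0)=\big[\psi_1(0)\varphi_1(0)+\psi_1(0)\mathrm{B}\varphi_1(0)e^{-\omega ir}r\big]^{-1}\psi_1(0)$ and $\Psi_1(\zeta)=\Psi_1(0)e^{-\omega i\zeta}$, $\zeta\in[0,r]$. Bilinear form on $C([0,r],\mathbb{C}^n)$ (row vectors) $\times\, C([-r,0],\mathbb{C}^n)$ (column vectors): $\langle\psi,\varphi\rangle=\psi(0)\varphi(0)+\int_{-r}^0\psi(\zeta+r)\mathrm{B}\varphi(\zeta)d\zeta$; then $\langle\Psi_1,\varphi_1\rangle=1$, $\langle\Psi_1,\varphi_2\rangle=0$. Center manifold: in $\mathcal{B}_C=C([-r,0],\mathbb{C}^n)$ with the projector $\mathcal{P}\phi=\langle\Psi_1,\phi\rangle\varphi_1+\langle\overline{\Psi_1},\phi\rangle\varphi_2$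 and $\mathcal{N}=(I-\mathcal{P})\mathcal{B}_C$, the local center manifold is the graph of a function $w(u,\overline u)=w(u\varphi_1+\overline u\varphi_2)=\sum_{j+k\ge2}\frac{1}{j!k!}w_{j,k}u^j\overline u^k$ with values in $\mathcal{N}$, $w_{j,k}\in\mathcal{B}_C$; in particular $\langle\Psi_1,w_{j,k}\rangle=0$. With $\Phi=u\varphi_1+\overline u\varphi_2+w(u,\overline u)$, write $\widehat f(\Phi(0),\Phi(-r))=\sum_{j+k\ge2}\frac{1}{j!k!}f_{j,k}u^j\overline u^k$ ($f_{j,k}\in\mathbb{C}^n$) and $g_{j,k}=\Psi_1(0)f_{j,k}$, so that the reduced equation on the center manifold is $\dot u=\omega iu+\sum_{j+k\ge2}\frac{1}{j!k!}g_{j,k}u^j\overline u^k$. The system in the claim is the one obtained for the value $w_{2,1}(0)$ of the third order coefficient $w_{2,1}$. *)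

theory Defs
  imports "HOL-Analysis.Analysis"
begin

definition cvec :: "real^'n \<Rightarrow> complex^'n" where
  "cvec x = (\<chi> i. complex_of_real (x$i))"
definition rvec :: "complex^'n \<Rightarrow> real^'n" where
  "rvec v = (\<chi> i. Re (v$i))"
definition vcnj :: "complex^'n \<Rightarrow> complex^'n" where
  "vcnj v = (\<chi> i. cnj (v$i))"
definition cmat :: "real^'n^'m \<Rightarrow> complex^'n^'m" where
  "cmat M = (\<chi> i j. complex_of_real (M$i$j))"

definition rdot :: "complex^'n \<Rightarrow> complex^'n \<Rightarrow> complex" where
  "rdot p v = (\<Sum>i\<in>UNIV. p$i * v$i)"

definition charmat :: "real^'n^'n \<Rightarrow> real^'n^'n \<Rightarrow> real \<Rightarrow> complex \<Rightarrow> complex^'n^'n" where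
  "charmat A B r lam = (\<chi> i j. (if i = j then lam else 0) - cmat A $ i $ j
                                 - exp (- lam * complex_of_real r) * cmat B $ i $ j)"
definition charfun :: "real^'n^'n \<Rightarrow> real^'n^'n \<Rightarrow> real \<Rightarrow> complex \<Rightarrow> complex" where
  "charfun A B r lam = det (charmat A B r lam)"

definition bform :: "real^'n^'n \<Rightarrow> real \<Rightarrow> (real \<Rightarrow> complex^'n) \<Rightarrow> (real \<Rightarrow> complex^'n) \<Rightarrow> complex" where
  "bform B r psi phi = rdot (psi 0) (phi 0)
      + integral {-r..0} (\<lambda>z. rdot (psi (z + r)) (cmat B *v phi z))"

definition taylor_uubar :: "nat \<Rightarrow> (complex \<Rightarrow> complex^'n) \<Rightarrow> (nat \<Rightarrow> nat \<Rightarrow> complex^'n) \<Rightarrow> bool" where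
  "taylor_uubar N G c \<longleftrightarrow> (\<forall>e>0. eventually (\<lambda>u. norm (G u -
      (\<Sum>j\<le>N. \<Sum>k\<le>N - j. (u ^ j * cnj u ^ k / (fact j * fact k)) *s c j k))
        \<le> e * norm u ^ N) (at 0))"

definition taylor_uubar_unif :: "nat \<Rightarrow> real set \<Rightarrow> (complex \<Rightarrow> real \<Rightarrow> complex^'n)
      \<Rightarrow> (nat \<Rightarrow> nat \<Rightarrow> real \<Rightarrow> complex^'n) \<Rightarrow> bool" where
  "taylor_uubar_unif N S W c \<longleftrightarrow> (\<forall>e>0. eventually (\<lambda>u. \<forall>\<theta>\<in>S. norm (W u \<theta> -
      (\<Sum>j\<le>N. \<Sum>k\<le>N - j. (u ^ j * cnj u ^ k / (fact j * fact k)) *s c j k \<theta>))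
        \<le> e * norm u ^ N) (at 0))"

text \<open>C^k on an (open) set: iterated directional derivatives up to order k exist and
  are continuous.  F ds x is the derivative of f at x along the directions in ds.\<close>
definition Ck_on :: "nat \<Rightarrow> 'a::real_normed_vector set \<Rightarrow> ('a \<Rightarrow> 'b::real_normed_vector) \<Rightarrow> bool" where
  "Ck_on k D f \<longleftrightarrow> (\<exists>F :: 'a list \<Rightarrow> 'a \<Rightarrow> 'b.
      (\<forall>x\<in>D. F [] x = f x) \<and>
      (\<forall>ds. length ds \<le> k \<longrightarrow> continuous_on D (F ds)) \<and>
      (\<forall>ds. length ds < k \<longrightarrow> (\<forall>x\<in>D. (F ds has_derivative (\<lambda>h. F (h # ds) x)) (at x))))"

definition dde_solution :: "((real^'n) \<times> (real^'n) \<Rightarrow> real^'n) \<Rightarrow> real \<Rightarrow> ((real^'n) \<times> (real^'n)) set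
      \<Rightarrow> real \<Rightarrow> (real \<Rightarrow> real^'n) \<Rightarrow> bool" where
  "dde_solution f r D T x \<longleftrightarrow> continuous_on {-r..T} x \<and>
     (\<forall>t\<in>{0..T}. (x t, x (t - r)) \<in> D \<and>
        (x has_vector_derivative f (x t, x (t - r))) (at t within {0..T}))"

end

theory Submission
  imports Defs
begin

lemma det_rowop:
  fixes N :: "'a::comm_ring_1^'n^'n"
  shows "det (\<chi> i. if i = b then (\<Sum>j\<in>UNIV. v$j *s N$j) else N$i) = v$b * det N"
proof -
  have "det (\<chi> i. if i = b then (\<Sum>j\<in>UNIV. v$j *s N$j) else N$i)
      = (\<Sum>j\<in>UNIV. det (\<chi> i. if i = b then v$j *s N$j else N$i))"
    by (rule det_linear_row_sum) simp
  also have "\<dots> = (\<Sum>j\<in>UNIV. v$j * det (\<chi> i. if i = b then N$j else N$i))"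
    using det_row_mul[of b "v$_" "\<lambda>i. N$_" "\<lambda>i. N$i"] by (metis (no_types))
  also have "\<dots> = v$b * det (\<chi> i. if i = b then N$b else N$i)"
  proof -
    have z: "det (\<chi> i. if i = b then N$j else N$i) = 0" if "j \<noteq> b" for j
      by (rule det_identical_rows[of b j]) (use that in \<open>auto simp: row_def vec_eq_iff\<close>)
    show ?thesis
      by (subst sum.remove[of UNIV b]) (auto simp: z)
  qed
  also have "(\<chi> i. if i = b then N$b else N$i) = N" by (simp add: vec_eq_iff)
  finally show ?thesis .
qed

lemma tendsto_det:
  fixes N :: "'b \<Rightarrow> 'a::real_normed_field^'n^'n"
  assumes "\<And>i j. ((\<lambda>x. N x $i$j) \<longlongrightarrow> L$i$j) F"
  shows "((\<lambda>x. det (N x)) \<longlongrightarrow> det L) F"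
  unfolding det_def by (intro tendsto_intros assms)

lemma det_tendsto_zero:
  fixes N :: "'b \<Rightarrow> 'a::real_normed_field^'n^'n"
  assumes ent: "\<And>i j. ((\<lambda>x. N x $i$j) \<longlongrightarrow> L$i$j) F" and vb: "v$b \<noteq> 0"
    and comb: "((\<lambda>x. \<Sum>j\<in>UNIV. v$j *s N x $ j) \<longlongrightarrow> 0) F"
  shows "((\<lambda>x. det (N x)) \<longlongrightarrow> 0) F"
proof -
  define L' where "L' = (\<chi> i j. if i = b then 0 else L$i$j)"
  have "((\<lambda>x. det (\<chi> i. if i = b then (\<Sum>j\<in>UNIV. v$j *s N x$j) else N x$i)) \<longlongrightarrow> det L') F"
  proof (rule tendsto_det)
    fix i j
    show "((\<lambda>x. (\<chi> i. if i = b then (\<Sum>j\<in>UNIV. v$j *s N x$j) else N x$i) $ i $ j) \<longlongrightarrow> L' $ i $ j) F"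
    proof (cases "i = b")
      case True
      then show ?thesis using tendsto_vec_nth[OF comb, of j] by (simp add: L'_def)
    qed (simp add: L'_def ent)
  qed
  moreover have "det L' = 0"
    by (rule det_zero_row(2)[of b]) (simp add: L'_def row_def vec_eq_iff)
  ultimately have "((\<lambda>x. v$b * det (N x)) \<longlongrightarrow> 0) F"
    by (simp add: det_rowop)
  then have "((\<lambda>x. (v$b * det (N x)) / v$b) \<longlongrightarrow> 0) F"
    using tendsto_divide_zero by blast
  then show ?thesis using vb by simp
qed
lemma chardiff:
  fixes p :: "complex^'n"
  shows "(\<Sum>j\<in>UNIV. p$j *s charmat A B r lam $ j) - (\<Sum>j\<in>UNIV. p$j *s charmat A B r lam0 $ j)
     = (lam - lam0) *s p - (exp (- lam * complex_of_real r) - exp (- lam0 * complex_of_real r)) *s (\<Sum>j\<in>UNIV. p$j *s cmat B $ j)"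
proof -
  define e where "e = exp (- lam * complex_of_real r)"
  define e0 where "e0 = exp (- lam0 * complex_of_real r)"
  have d: "(\<Sum>j\<in>UNIV. p $ j * (if j = k then c else 0)) = p$k * c" for k and c :: complex
    by (simp add: if_distrib sum.delta cong: if_cong)
  have "(\<Sum>j\<in>UNIV. p $ j * charmat A B r lam $ j $ k) - (\<Sum>j\<in>UNIV. p $ j * charmat A B r lam0 $ j $ k)
      = (\<Sum>j\<in>UNIV. p $ j * (if j = k then lam - lam0 else 0) - (e - e0) * (p$j * cmat B $ j $ k))" for k
    unfolding sum_subtractf[symmetric]
    by (rule sum.cong) (auto simp: charmat_def e_def e0_def algebra_simps)
  also have "\<dots> k = p$k * (lam - lam0) - (e - e0) * (\<Sum>j\<in>UNIV. p$j * cmat B $ j $ k)" for k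
    by (simp add: sum_subtractf d sum_distrib_left)
  finally show ?thesis
    by (simp add: vec_eq_iff sum_component e_def e0_def algebra_simps)
qed

lemma Qlim:
  "((\<lambda>lam. (exp (- lam * complex_of_real r) - exp (- lam0 * complex_of_real r)) / (lam - lam0))
     \<longlongrightarrow> - complex_of_real r * exp (- lam0 * complex_of_real r)) (at lam0)"
proof -
  have "((\<lambda>lam. exp (- lam * complex_of_real r)) has_field_derivative
          exp (- lam0 * complex_of_real r) * (- complex_of_real r)) (at lam0)"
    by (auto intro!: derivative_eq_intros)
  then show ?thesis by (simp add: has_field_derivative_iff mult.commute)
qed

lemma charmat_tendsto:
  "((\<lambda>lam. charmat A B r lam $ i $ j) \<longlongrightarrow> charmat A B r lam0 $ i $ j) (at lam0)"
  unfolding charmat_def by (auto intro!: tendsto_intros)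
lemma charfun_deriv0:
  fixes p :: "complex^'n" and A B :: "real^'n^'n" and lam0 :: complex and r :: real
  defines "Q \<equiv> \<lambda>lam. (exp (- lam * complex_of_real r) - exp (- lam0 * complex_of_real r)) / (lam - lam0)"
  defines "pB \<equiv> (\<Sum>j\<in>UNIV. p$j *s cmat B $ j)"
  assumes pa: "p$a \<noteq> 0" and pnull: "(\<Sum>j\<in>UNIV. p$j *s charmat A B r lam0 $ j) = 0"
    and lim: "((\<lambda>lam. det (\<chi> i. if i = a then p - Q lam *s pB else charmat A B r lam $ i)) \<longlongrightarrow> 0) (at lam0)"
  shows "deriv (charfun A B r) lam0 = 0"
proof -
  have c0: "charfun A B r lam0 = 0"
  proof -
    have "p$a * charfun A B r lam0 = det (\<chi> i. if i = a then (\<Sum>j\<in>UNIV. p$j *s charmat A B r lam0 $ j) else charmat A B r lam0 $ i)"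
      by (simp add: det_rowop charfun_def)
    also have "\<dots> = 0"
      by (rule det_zero_row(2)[of a]) (simp add: pnull row_def vec_eq_iff)
    finally show ?thesis using pa by simp
  qed
  have eq: "charfun A B r lam / (lam - lam0) = det (\<chi> i. if i = a then p - Q lam *s pB else charmat A B r lam $ i) / p$a"
    if ne: "lam \<noteq> lam0" for lam
  proof -
    have "(\<Sum>j\<in>UNIV. p$j *s charmat A B r lam $ j) = (lam - lam0) *s p
        - (exp (- lam * complex_of_real r) - exp (- lam0 * complex_of_real r)) *s pB"
      using chardiff[of p A B r lam lam0] pnull by (simp add: pB_def)
    also have "(exp (- lam * complex_of_real r) - exp (- lam0 * complex_of_real r)) = (lam - lam0) * Q lam"
      using ne by (simp add: Q_def)
    finally have s: "(\<Sum>j\<in>UNIV. p$j *s charmat A B r lam $ j) = (lam - lam0) *s (p - Q lam *s pB)"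
      by (simp add: vector_ssub_ldistrib vector_smult_assoc)
    have "p$a * charfun A B r lam = det (\<chi> i. if i = a then (lam - lam0) *s (p - Q lam *s pB) else charmat A B r lam $ i)"
      unfolding s[symmetric] det_rowop charfun_def ..
    also have "\<dots> = (lam - lam0) * det (\<chi> i. if i = a then p - Q lam *s pB else charmat A B r lam $ i)"
      by (rule det_row_mul)
    finally show ?thesis using pa ne by (simp add: field_simps)
  qed
  have "((\<lambda>lam. det (\<chi> i. if i = a then p - Q lam *s pB else charmat A B r lam $ i) / p$a) \<longlongrightarrow> 0) (at lam0)"
    using tendsto_divide_zero[OF lim] by blast
  then have "((\<lambda>lam. (charfun A B r lam - charfun A B r lam0) / (lam - lam0)) \<longlongrightarrow> 0) (at lam0)"
    by (rule Lim_transform_eventually) (auto simp: eventually_at_filter c0 eq)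
  then have "(charfun A B r has_field_derivative 0) (at lam0)"
    by (simp add: has_field_derivative_iff)
  then show ?thesis by (rule DERIV_imp_deriv)
qed
lemma comb_tendsto:
  fixes N :: "'b \<Rightarrow> 'a::real_normed_field^'n^'n"
  assumes "\<And>i j. ((\<lambda>x. N x $i$j) \<longlongrightarrow> L$i$j) F"
  shows "((\<lambda>x. \<Sum>j\<in>UNIV. v$j *s N x $ j) \<longlongrightarrow> (\<Sum>j\<in>UNIV. v$j *s L$j)) F"
  by (rule vec_tendstoI) (simp add: sum_component, intro tendsto_intros assms)

lemma comb_lin:
  fixes N :: "'a::comm_ring_1^'n^'n"
  shows "(\<Sum>j\<in>UNIV. (x - c *s y)$j *s N$j) = (\<Sum>j\<in>UNIV. x$j *s N$j) - c *s (\<Sum>j\<in>UNIV. y$j *s N$j)"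
  by (simp add: vec_eq_iff sum_component algebra_simps sum_subtractf sum_distrib_left)

lemma Nf_tendsto:
  fixes p :: "complex^'n" and A B :: "real^'n^'n" and lam0 :: complex and r :: real
  shows "((\<lambda>lam. (\<chi> i. if i = a then p - ((exp (- lam * complex_of_real r) - exp (- lam0 * complex_of_real r)) / (lam - lam0)) *s (\<Sum>j\<in>UNIV. p$j *s cmat B $ j) else charmat A B r lam $ i) $ i $ j)
    \<longlongrightarrow> (\<chi> i. if i = a then p + (complex_of_real r * exp (- lam0 * complex_of_real r)) *s (\<Sum>j\<in>UNIV. p$j *s cmat B $ j) else charmat A B r lam0 $ i) $ i $ j) (at lam0)"
proof (cases "i = a")
  case True
  have "((\<lambda>lam. p$j - ((exp (- lam * complex_of_real r) - exp (- lam0 * complex_of_real r)) / (lam - lam0)) * (\<Sum>j\<in>UNIV. p$j *s cmat B $ j)$j)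
     \<longlongrightarrow> p$j - (- complex_of_real r * exp (- lam0 * complex_of_real r)) * (\<Sum>j\<in>UNIV. p$j *s cmat B $ j)$j) (at lam0)"
    by (intro tendsto_intros Qlim)
  then show ?thesis using True by simp
next
  case False
  then show ?thesis by (simp add: charmat_tendsto)
qed

lemma left_kernel:
  fixes psi q :: "complex^'n" and A B :: "real^'n^'n" and lam0 :: complex and r :: real
  assumes simple: "deriv (charfun A B r) lam0 \<noteq> 0"
    and psinz: "psi \<noteq> 0" and psinull: "(\<Sum>j\<in>UNIV. psi$j *s charmat A B r lam0 $ j) = 0"
    and qnull: "(\<Sum>j\<in>UNIV. q$j *s charmat A B r lam0 $ j) = 0"
  shows "\<exists>c. q = c *s psi"
proof (rule ccontr)
  assume nc: "\<not> (\<exists>c. q = c *s psi)"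
  obtain a where pa: "psi$a \<noteq> 0" using psinz by (metis vec_eq_iff zero_index)
  define p2 where "p2 = q - (q$a / psi$a) *s psi"
  have "p2 \<noteq> 0" using nc unfolding p2_def by (metis eq_iff_diff_eq_0)
  then obtain b where p2b: "p2$b \<noteq> 0" by (metis vec_eq_iff zero_index)
  have p2a: "p2$a = 0" using pa by (simp add: p2_def)
  have p2null: "(\<Sum>j\<in>UNIV. p2$j *s charmat A B r lam0 $ j) = 0"
    using psinull qnull unfolding p2_def comb_lin by simp
  define Nf where "Nf = (\<lambda>lam. (\<chi> i. if i = a then psi - ((exp (- lam * complex_of_real r) - exp (- lam0 * complex_of_real r)) / (lam - lam0)) *s (\<Sum>j\<in>UNIV. psi$j *s cmat B $ j) else charmat A B r lam $ i))"
  define L where "L = (\<chi> i. if i = a then psi + (complex_of_real r * exp (- lam0 * complex_of_real r)) *s (\<Sum>j\<in>UNIV. psi$j *s cmat B $ j) else charmat A B r lam0 $ i)"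
  have ent: "((\<lambda>lam. Nf lam $ i $ j) \<longlongrightarrow> L $ i $ j) (at lam0)" for i j
    unfolding Nf_def L_def by (rule Nf_tendsto)
  have cm: "(\<Sum>j\<in>UNIV. p2$j *s Nf lam $ j) = (\<Sum>j\<in>UNIV. p2$j *s charmat A B r lam $ j)" for lam
    by (rule sum.cong) (auto simp: Nf_def p2a)
  have "((\<lambda>lam. \<Sum>j\<in>UNIV. p2$j *s Nf lam $ j) \<longlongrightarrow> 0) (at lam0)"
    unfolding cm using comb_tendsto[of "charmat A B r" "charmat A B r lam0" "at lam0" p2, OF charmat_tendsto] p2null
    by simp
  then have "((\<lambda>lam. det (Nf lam)) \<longlongrightarrow> 0) (at lam0)"
    by (rule det_tendsto_zero[OF ent p2b])
  then have "deriv (charfun A B r) lam0 = 0"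
    unfolding Nf_def by (rule charfun_deriv0[OF pa psinull])
  then show False using simple by simp
qed
lemma den_nz:
  fixes psi phi :: "complex^'n" and A B :: "real^'n^'n" and lam0 :: complex and r :: real
  assumes simple: "deriv (charfun A B r) lam0 \<noteq> 0"
    and psinz: "psi \<noteq> 0" and psinull: "(\<Sum>j\<in>UNIV. psi$j *s charmat A B r lam0 $ j) = 0"
    and phinz: "phi \<noteq> 0" and phinull: "charmat A B r lam0 *v phi = 0"
  shows "rdot psi phi + rdot psi (cmat B *v phi) * exp (- lam0 * complex_of_real r) * complex_of_real r \<noteq> 0"
proof
  assume den: "rdot psi phi + rdot psi (cmat B *v phi) * exp (- lam0 * complex_of_real r) * complex_of_real r = 0"
  obtain a where pa: "psi$a \<noteq> 0" using psinz by (metis vec_eq_iff zero_index)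
  obtain c where pc: "phi$c \<noteq> 0" using phinz by (metis vec_eq_iff zero_index)
  define Nf where "Nf = (\<lambda>lam. (\<chi> i. if i = a then psi - ((exp (- lam * complex_of_real r) - exp (- lam0 * complex_of_real r)) / (lam - lam0)) *s (\<Sum>j\<in>UNIV. psi$j *s cmat B $ j) else charmat A B r lam $ i))"
  define L where "L = (\<chi> i. if i = a then psi + (complex_of_real r * exp (- lam0 * complex_of_real r)) *s (\<Sum>j\<in>UNIV. psi$j *s cmat B $ j) else charmat A B r lam0 $ i)"
  have ent: "((\<lambda>lam. Nf lam $ i $ j) \<longlongrightarrow> L $ i $ j) (at lam0)" for i j
    unfolding Nf_def L_def by (rule Nf_tendsto)
  have entT: "((\<lambda>lam. transpose (Nf lam) $ i $ j) \<longlongrightarrow> transpose L $ i $ j) (at lam0)" for i j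
    by (simp add: transpose_def ent)
  have lim0: "(\<Sum>j\<in>UNIV. phi$j *s transpose L $ j) = 0"
  proof (rule iffD2[OF vec_eq_iff], intro allI)
    fix i
    show "(\<Sum>j\<in>UNIV. phi$j *s transpose L $ j) $ i = 0 $ i"
    proof (cases "i = a")
      case True
      have "(\<Sum>j\<in>UNIV. phi$j *s transpose L $ j) $ i
          = (\<Sum>j\<in>UNIV. phi$j * (psi$j + complex_of_real r * exp (- lam0 * complex_of_real r) * (\<Sum>k\<in>UNIV. psi$k * cmat B $ k $ j)))"
        using True by (simp add: sum_component transpose_def L_def)
      also have "\<dots> = rdot psi phi + rdot psi (cmat B *v phi) * exp (- lam0 * complex_of_real r) * complex_of_real r"
      proof -
        have sw: "(\<Sum>j\<in>UNIV. phi$j * (\<Sum>k\<in>UNIV. psi$k * cmat B $ k $ j)) = (\<Sum>k\<in>UNIV. psi$k * (\<Sum>j\<in>UNIV. cmat B $ k $ j * phi$j))"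
          by (simp add: sum_distrib_left mult_ac) (rule sum.swap)
        have "(\<Sum>j\<in>UNIV. phi$j * (psi$j + complex_of_real r * exp (- lam0 * complex_of_real r) * (\<Sum>k\<in>UNIV. psi$k * cmat B $ k $ j)))
            = (\<Sum>j\<in>UNIV. psi$j * phi$j) + complex_of_real r * exp (- lam0 * complex_of_real r) * (\<Sum>j\<in>UNIV. phi$j * (\<Sum>k\<in>UNIV. psi$k * cmat B $ k $ j))"
          by (simp add: distrib_left sum.distrib sum_distrib_left mult_ac)
        then show ?thesis unfolding rdot_def matrix_vector_mult_def sw by (simp add: mult_ac)
      qed
      finally show ?thesis using den by simp
    next
      case False
      have "(\<Sum>j\<in>UNIV. phi$j *s transpose L $ j) $ i = (charmat A B r lam0 *v phi) $ i"
        using False by (simp add: sum_component transpose_def L_def matrix_vector_mult_def mult.commute)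
      then show ?thesis using phinull by simp
    qed
  qed
  have "((\<lambda>lam. \<Sum>j\<in>UNIV. phi$j *s transpose (Nf lam) $ j) \<longlongrightarrow> 0) (at lam0)"
    using comb_tendsto[of "\<lambda>lam. transpose (Nf lam)" "transpose L" "at lam0" phi, OF entT] lim0 by simp
  then have "((\<lambda>lam. det (transpose (Nf lam))) \<longlongrightarrow> 0) (at lam0)"
    by (rule det_tendsto_zero[OF entT pc])
  then have "((\<lambda>lam. det (Nf lam)) \<longlongrightarrow> 0) (at lam0)" by simp
  then have "deriv (charfun A B r) lam0 = 0"
    unfolding Nf_def by (rule charfun_deriv0[OF pa psinull])
  then show False using simple by simp
qed
lemma inner_rdot: "inner z v = Re (rdot (vcnj z) v)"
  by (simp add: inner_vec_def rdot_def vcnj_def inner_complex_def Re_sum)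

lemma mv_scaleR: fixes M :: "complex^'n^'m" shows "M *v (c *\<^sub>R x) = c *\<^sub>R (M *v x)"
  by (simp add: vec_eq_iff matrix_vector_mult_def scaleR_sum_right)

lemma mv_smult: fixes M :: "complex^'n^'m" shows "M *v (c *s x) = c *s (M *v x)"
  by (simp add: vec_eq_iff matrix_vector_mult_def sum_distrib_left algebra_simps)

lemma rdot_add: "rdot p (x + y) = rdot p x + rdot p y"
  by (simp add: rdot_def algebra_simps sum.distrib)
lemma rdot_diff: "rdot p (x - y) = rdot p x - rdot p y"
  by (simp add: rdot_def algebra_simps sum_subtractf)
lemma rdot_smult: "rdot p (c *s x) = c * rdot p x"
  by (simp add: rdot_def algebra_simps sum_distrib_left)
lemma rdot_smult_left: "rdot (c *s p) x = c * rdot p x"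
  by (simp add: rdot_def algebra_simps sum_distrib_left)
lemma rdot_zero[simp]: "rdot p 0 = 0"
  by (simp add: rdot_def)
lemma rdot_neg: "rdot p (- x) = - rdot p x"
  by (simp add: rdot_def sum_negf)

lemma range_from_left_kernel:
  fixes M :: "complex^'n^'n" and psi b :: "complex^'n"
  assumes lk: "\<And>q. (\<Sum>j\<in>UNIV. q$j *s M$j) = 0 \<Longrightarrow> \<exists>c. q = c *s psi"
    and pb: "rdot psi b = 0"
  shows "\<exists>X. M *v X = b"
proof -
  define S where "S = range (\<lambda>x. M *v x)"
  have sub: "subspace S"
    unfolding subspace_def S_def
    by (auto simp: matrix_vector_right_distrib mv_scaleR intro: range_eqI[of _ _ 0] range_eqI[of _ _ "_ + _"] range_eqI[of _ _ "_ *\<^sub>R _"])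
  obtain y z where y: "y \<in> span S" and zo: "\<And>w. w \<in> span S \<Longrightarrow> orthogonal z w" and bz: "b = y + z"
    using orthogonal_subspace_decomp_exists[of S b] by blast
  have spanS: "span S = S" using sub by (simp add: span_eq_iff)
  have q0: "rdot (vcnj z) (M *v x) = 0" for x
  proof -
    have "M *v x \<in> S" "M *v (\<i> *s x) \<in> S" unfolding S_def by auto
    then have "inner z (M *v x) = 0" "inner z (M *v (\<i> *s x)) = 0"
      using zo spanS by (auto simp: orthogonal_def)
    then have "Re (rdot (vcnj z) (M *v x)) = 0" "Re (\<i> * rdot (vcnj z) (M *v x)) = 0"
      by (simp_all add: inner_rdot mv_smult rdot_smult)
    then show ?thesis by (simp add: complex_eq_iff)
  qed
  have "(\<Sum>j\<in>UNIV. vcnj z $ j *s M $ j) = 0"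
  proof (rule iffD2[OF vec_eq_iff], intro allI)
    fix k
    have "(\<Sum>j\<in>UNIV. vcnj z $ j *s M $ j) $ k = rdot (vcnj z) (M *v axis k 1)"
      by (simp add: sum_component rdot_def matrix_vector_mult_def axis_def if_distrib sum.delta cong: if_cong)
    then show "(\<Sum>j\<in>UNIV. vcnj z $ j *s M $ j) $ k = 0 $ k" using q0 by simp
  qed
  then obtain c where qc: "vcnj z = c *s psi" using lk by blast
  have "rdot (vcnj z) b = 0" using pb by (simp add: qc rdot_smult_left)
  moreover obtain x0 where "y = M *v x0" using y spanS unfolding S_def by auto
  ultimately have "rdot (vcnj z) z = 0" using q0 by (simp add: bz rdot_add)
  then have "inner z z = 0" by (simp add: inner_rdot)
  then have "z = 0" by simp
  then show ?thesis using y spanS bz unfolding S_def by auto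
qed
lemma sum3_expand:
  fixes F :: "nat \<Rightarrow> nat \<Rightarrow> 'a::comm_monoid_add"
  shows "(\<Sum>j\<le>3. \<Sum>k\<le>3 - j. F j k) = F 0 0 + F 0 1 + F 0 2 + F 0 3 + F 1 0 + F 1 1 + F 1 2 + F 2 0 + F 2 1 + F 3 0"
  by (simp add: numeral_3_eq_3 numeral_2_eq_2 ac_simps)

lemma small_coeff:
  fixes a b :: complex
  assumes "d > 0" and h: "\<And>t. 0 < t \<Longrightarrow> t < d \<Longrightarrow> norm (complex_of_real t ^ 2 * a + complex_of_real t ^ 3 * b) \<le> K * t ^ 3"
  shows "a = 0"
proof (rule ccontr)
  assume an: "a \<noteq> 0"
  define t where "t = min (d/2) (norm a / (2 * (norm b + \<bar>K\<bar> + 1)))"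
  have "norm a > 0" using an by simp
  moreover have "2 * (norm b + \<bar>K\<bar> + 1) > 0" by (smt (verit) norm_ge_zero)
  ultimately have tpos: "t > 0" using \<open>d > 0\<close> by (simp add: t_def)
  have td: "t < d" using \<open>d > 0\<close> by (simp add: t_def)
  have "t^2 * norm a \<le> norm (complex_of_real t ^ 2 * a + complex_of_real t ^ 3 * b) + norm (complex_of_real t ^ 3 * b)"
    using norm_triangle_ineq4[of "complex_of_real t ^ 2 * a + complex_of_real t ^ 3 * b" "complex_of_real t ^ 3 * b"]
    by (simp add: norm_mult norm_power tpos)
  also have "\<dots> \<le> K * t^3 + t^3 * norm b"
    using h[OF tpos td] tpos by (simp add: norm_mult norm_power)
  finally have "t^2 * norm a \<le> t^2 * (t * (K + norm b))" by (simp add: power3_eq_cube power2_eq_square algebra_simps)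
  then have "norm a \<le> t * (K + norm b)" using tpos by simp
  also have "\<dots> \<le> t * (norm b + \<bar>K\<bar> + 1)" using tpos by (intro mult_left_mono) auto
  also have "\<dots> \<le> norm a / 2"
  proof -
    have "t \<le> norm a / (2 * (norm b + \<bar>K\<bar> + 1))" by (simp add: t_def)
    then have "t * (norm b + \<bar>K\<bar> + 1) \<le> norm a / (2 * (norm b + \<bar>K\<bar> + 1)) * (norm b + \<bar>K\<bar> + 1)"
      by (intro mult_right_mono) auto
    also have "\<dots> = norm a / 2"
    proof -
      have "norm b + \<bar>K\<bar> + 1 \<noteq> 0" by (smt (verit) norm_ge_zero)
      then show ?thesis by (simp add: field_simps)
    qed
    finally show ?thesis .
  qed
  finally show False using an by simp
qed
lemma coeff_extract:
  fixes c :: "nat \<Rightarrow> nat \<Rightarrow> complex"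
  assumes low: "c 0 0 = 0" "c 1 0 = 0" "c 0 1 = 0" and dpos: "d > 0"
    and bd: "\<And>u. 0 < norm u \<Longrightarrow> norm u < d \<Longrightarrow>
       norm (\<Sum>j\<le>3. \<Sum>k\<le>3-j. (u^j * cnj u^k / (fact j * fact k)) * c j k) \<le> K * norm u ^ 3"
  shows "c 2 0 = 0 \<and> c 1 1 = 0 \<and> c 0 2 = 0"
proof -
  have S2: "z^2/2 * c 2 0 + z * cnj z * c 1 1 + cnj z^2/2 * c 0 2 = 0" if zn: "z \<noteq> 0" for z
  proof (rule small_coeff)
    show "d / norm z > 0" using dpos zn by simp
    fix t :: real assume t: "0 < t" "t < d / norm z"
    define u where "u = complex_of_real t * z"
    have nu: "norm u = t * norm z" using t by (simp add: u_def norm_mult)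
    have u1: "0 < norm u" "norm u < d" using t zn by (auto simp: nu field_simps)
    have "(\<Sum>j\<le>3. \<Sum>k\<le>3-j. (u^j * cnj u^k / (fact j * fact k)) * c j k)
      = complex_of_real t ^ 2 * (z^2/2 * c 2 0 + z * cnj z * c 1 1 + cnj z^2/2 * c 0 2)
        + complex_of_real t ^ 3 * (z^3/6 * c 3 0 + z^2 * cnj z / 2 * c 2 1 + z * cnj z^2 / 2 * c 1 2 + cnj z^3/6 * c 0 3)"
      unfolding sum3_expand using low
      by (simp add: u_def fact_numeral power2_eq_square power3_eq_cube field_simps)
    then show "norm (complex_of_real t ^ 2 * (z^2/2 * c 2 0 + z * cnj z * c 1 1 + cnj z^2/2 * c 0 2)
        + complex_of_real t ^ 3 * (z^3/6 * c 3 0 + z^2 * cnj z / 2 * c 2 1 + z * cnj z^2 / 2 * c 1 2 + cnj z^3/6 * c 0 3))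
       \<le> (K * norm z ^ 3) * t ^ 3"
      using bd[OF u1] by (simp add: nu power_mult_distrib mult_ac)
  qed
  have e1: "c 2 0 / 2 + c 1 1 + c 0 2 / 2 = 0" using S2[of 1] by simp
  have e2: "- c 2 0 / 2 + c 1 1 - c 0 2 / 2 = 0" using S2[of \<i>] by (simp add: power2_eq_square)
  have e3: "\<i> * c 2 0 + 2 * c 1 1 - \<i> * c 0 2 = 0"
  proof -
    have "(1 + \<i>)^2 = 2 * \<i>" "cnj (1 + \<i>) ^ 2 = - 2 * \<i>" "(1 + \<i>) * cnj (1 + \<i>) = 2"
      by (simp_all add: power2_eq_square algebra_simps complex_eq_iff)
    with S2[of "1 + \<i>"] show ?thesis by (simp add: complex_eq_iff)
  qed
  from e1 e2 e3 show ?thesis by (simp add: complex_eq_iff)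
qed
lemma rdot_scaleR: "rdot p (c *\<^sub>R v) = c *\<^sub>R rdot p v"
  by (simp add: rdot_def scaleR_sum_right)

lemma bl_rdotM: "bounded_linear (\<lambda>v::complex^'n. rdot p (M *v v))"
  unfolding linear_conv_bounded_linear[symmetric]
proof (rule linearI)
  show "rdot p (M *v (x + y)) = rdot p (M *v x) + rdot p (M *v y)" for x y
    by (simp add: matrix_vector_right_distrib rdot_add)
  show "rdot p (M *v (c *\<^sub>R x)) = c *\<^sub>R rdot p (M *v x)" for c x
    apply (subst mv_scaleR) apply (subst rdot_scaleR) ..
qed

lemma bl_rdot: "bounded_linear (\<lambda>v::complex^'n. rdot p v)"
  unfolding linear_conv_bounded_linear[symmetric]
  by (rule linearI) (simp_all add: rdot_def sum.distrib algebra_simps scaleR_sum_right)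

lemma bl_smult: "bounded_linear (\<lambda>v::complex^'n. c *s v)"
  unfolding linear_conv_bounded_linear[symmetric]
  by (rule linearI) (simp_all add: vec_eq_iff algebra_simps)

lemma bl_cvec: "bounded_linear (cvec :: real^'n \<Rightarrow> complex^'n)"
  unfolding linear_conv_bounded_linear[symmetric]
  by (rule linearI) (simp_all add: vec_eq_iff cvec_def, simp add: scaleR_conv_of_real)

lemma int_smult:
  fixes f :: "real \<Rightarrow> complex^'n"
  assumes "f integrable_on S"
  shows "integral S (\<lambda>x. c *s f x) = c *s integral S f"
  using integral_linear[OF assms bl_smult[of c]] by (simp add: o_def)

lemma norm_smult_vec: "norm (c *s (v::complex^'n)) = norm c * norm v"
  by (simp add: norm_vec_def norm_mult L2_set_right_distrib)

lemma cont_cvec: "continuous_on S g \<Longrightarrow> continuous_on S (\<lambda>x. cvec (g x))"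
  using bounded_linear.continuous_on[OF bl_cvec] by blast
lemma cont_smult:
  fixes \<phi> :: "real \<Rightarrow> complex^'n"
  assumes "continuous_on S c" "continuous_on S \<phi>"
  shows "continuous_on S (\<lambda>\<theta>. c \<theta> *s \<phi> \<theta>)"
proof -
  have eq: "(\<lambda>\<theta>. c \<theta> *s \<phi> \<theta>) = (\<lambda>\<theta>. \<chi> i. c \<theta> * \<phi> \<theta> $ i)" by (simp add: vec_eq_iff fun_eq_iff)
  show ?thesis unfolding eq
    using assms by (intro continuous_intros)
qed

lemma bform_Psi:
  fixes Psi0 :: "complex^'n" and B :: "real^'n^'n" and \<phi> :: "real \<Rightarrow> complex^'n" and \<omega> r :: real
  assumes cont: "continuous_on {-r..0} \<phi>"
  shows "bform B r (\<lambda>z. exp (- \<i> * complex_of_real \<omega> * complex_of_real z) *s Psi0) \<phi> =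
     rdot Psi0 (\<phi> 0) + exp (- \<i> * complex_of_real \<omega> * complex_of_real r)
        * rdot Psi0 (cmat B *v integral {-r..0} (\<lambda>\<theta>. exp (- \<i> * complex_of_real \<omega> * complex_of_real \<theta>) *s \<phi> \<theta>))"
proof -
  define ex where "ex = (\<lambda>\<theta>::real. exp (- \<i> * complex_of_real \<omega> * complex_of_real \<theta>))"
  have ic: "(\<lambda>\<theta>. ex \<theta> *s \<phi> \<theta>) integrable_on {-r..0}"
    by (rule integrable_continuous_interval, rule cont_smult[OF _ cont]) (auto simp: ex_def intro!: continuous_intros)
  have pt: "rdot (exp (- \<i> * complex_of_real \<omega> * complex_of_real (z + r)) *s Psi0) (cmat B *v \<phi> z)
      = ex r * rdot Psi0 (cmat B *v (ex z *s \<phi> z))" for z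
    by (simp add: ex_def rdot_smult_left mv_smult rdot_smult algebra_simps exp_add[symmetric])
  have "integral {-r..0} (\<lambda>z. ex r * rdot Psi0 (cmat B *v (ex z *s \<phi> z)))
       = ex r * integral {-r..0} (\<lambda>z. rdot Psi0 (cmat B *v (ex z *s \<phi> z)))" by simp
  also have "integral {-r..0} (\<lambda>z. rdot Psi0 (cmat B *v (ex z *s \<phi> z)))
      = rdot Psi0 (cmat B *v integral {-r..0} (\<lambda>z. ex z *s \<phi> z))"
    using integral_linear[OF ic bl_rdotM[of Psi0 "cmat B"]] by (simp add: o_def)
  finally show ?thesis unfolding bform_def pt by (simp add: ex_def)
qed
lemma rdot_sum: "rdot p (\<Sum>i\<in>I. f i) = (\<Sum>i\<in>I. rdot p (f i))"
  by (induction I rule: infinite_finite_induct) (simp_all add: rdot_add)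

lemma N_coeffs:
  fixes Psi0 :: "complex^'n" and B :: "real^'n^'n" and W :: "complex \<Rightarrow> real \<Rightarrow> complex^'n"
    and wc :: "nat \<Rightarrow> nat \<Rightarrow> real \<Rightarrow> complex^'n" and \<omega> r \<delta> :: real
  defines "Lf \<equiv> \<lambda>\<phi>. bform B r (\<lambda>z. exp (- \<i> * complex_of_real \<omega> * complex_of_real z) *s Psi0) \<phi>"
  assumes rpos: "r > 0" and dpos: "\<delta> > 0"
    and Wcont: "\<And>u. norm u < \<delta> \<Longrightarrow> continuous_on {-r..0} (W u)"
    and WN: "\<And>u. norm u < \<delta> \<Longrightarrow> Lf (W u) = 0"
    and wcc: "\<And>j k. continuous_on {-r..0} (wc j k)"
    and wcl: "\<And>j k \<theta>. j + k < 2 \<Longrightarrow> \<theta> \<in> {-r..0} \<Longrightarrow> wc j k \<theta> = 0"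
    and texp: "taylor_uubar_unif 3 {-r..0} W wc"
  shows "Lf (wc 2 0) = 0 \<and> Lf (wc 1 1) = 0 \<and> Lf (wc 0 2) = 0"
proof -
  define ex where "ex = (\<lambda>\<theta>::real. exp (- \<i> * complex_of_real \<omega> * complex_of_real \<theta>))"
  define E where "E = ex r"
  define ell where "ell = (\<lambda>v. rdot Psi0 (cmat B *v v))"
  define Ig where "Ig = (\<lambda>\<phi>::real \<Rightarrow> complex^'n. integral {-r..0} (\<lambda>\<theta>. ex \<theta> *s \<phi> \<theta>))"
  have exc: "continuous_on S ex" for S unfolding ex_def by (intro continuous_intros)
  have Lf_eq: "Lf \<phi> = rdot Psi0 (\<phi> 0) + E * ell (Ig \<phi>)" if "continuous_on {-r..0} \<phi>" for \<phi>
    unfolding Lf_def E_def ell_def Ig_def ex_def by (rule bform_Psi[OF that])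
  have intg: "(\<lambda>\<theta>. ex \<theta> *s \<phi> \<theta>) integrable_on {-r..0}" if "continuous_on {-r..0} \<phi>" for \<phi>
    by (rule integrable_continuous_interval, rule cont_smult[OF exc that])
  have bl: "bounded_linear ell" unfolding ell_def by (rule bl_rdotM)
  have Lf_diff: "Lf (\<lambda>\<theta>. \<phi> \<theta> - \<psi> \<theta>) = Lf \<phi> - Lf \<psi>"
    if "continuous_on {-r..0} \<phi>" "continuous_on {-r..0} \<psi>" for \<phi> \<psi>
  proof -
    have c: "continuous_on {-r..0} (\<lambda>\<theta>. \<phi> \<theta> - \<psi> \<theta>)" using that by (intro continuous_intros)
    have "Ig (\<lambda>\<theta>. \<phi> \<theta> - \<psi> \<theta>) = Ig \<phi> - Ig \<psi>"
      unfolding Ig_def using integral_diff[OF intg[OF that(1)] intg[OF that(2)]]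
      by (simp add: vector_ssub_ldistrib)
    then have "Lf (\<lambda>\<theta>. \<phi> \<theta> - \<psi> \<theta>) = rdot Psi0 (\<phi> 0 - \<psi> 0) + E * ell (Ig \<phi> - Ig \<psi>)"
      using Lf_eq[OF c] by simp
    also have "\<dots> = (rdot Psi0 (\<phi> 0) + E * ell (Ig \<phi>)) - (rdot Psi0 (\<psi> 0) + E * ell (Ig \<psi>))"
      by (simp add: rdot_diff linear_diff[OF bounded_linear.linear[OF bl]] algebra_simps)
    finally show ?thesis using Lf_eq[OF that(1)] Lf_eq[OF that(2)] by simp
  qed
  have Lf_smult: "Lf (\<lambda>\<theta>. a *s \<phi> \<theta>) = a * Lf \<phi>" if "continuous_on {-r..0} \<phi>" for \<phi> a
  proof -
    have c: "continuous_on {-r..0} (\<lambda>\<theta>. a *s \<phi> \<theta>)" by (rule cont_smult[OF _ that]) simp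
    have "Ig (\<lambda>\<theta>. a *s \<phi> \<theta>) = a *s Ig \<phi>"
      unfolding Ig_def using int_smult[OF intg[OF that], of a]
      by (simp add: vector_smult_assoc mult.commute)
    moreover have "ell (a *s v) = a * ell v" for v by (simp add: ell_def mv_smult rdot_smult)
    ultimately have "Lf (\<lambda>\<theta>. a *s \<phi> \<theta>) = a * (rdot Psi0 (\<phi> 0) + E * ell (Ig \<phi>))"
      using Lf_eq[OF c] by (simp add: rdot_smult algebra_simps)
    then show ?thesis using Lf_eq[OF that] by simp
  qed
  have Lf_add: "Lf (\<lambda>\<theta>. \<phi> \<theta> + \<psi> \<theta>) = Lf \<phi> + Lf \<psi>"
    if "continuous_on {-r..0} \<phi>" "continuous_on {-r..0} \<psi>" for \<phi> \<psi>
  proof -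
    have c: "continuous_on {-r..0} (\<lambda>\<theta>. \<phi> \<theta> + \<psi> \<theta>)" using that by (intro continuous_intros)
    have "Ig (\<lambda>\<theta>. \<phi> \<theta> + \<psi> \<theta>) = Ig \<phi> + Ig \<psi>"
      unfolding Ig_def using integral_add[OF intg[OF that(1)] intg[OF that(2)]]
      by (simp add: vector_add_ldistrib)
    then have "Lf (\<lambda>\<theta>. \<phi> \<theta> + \<psi> \<theta>) = rdot Psi0 (\<phi> 0 + \<psi> 0) + E * ell (Ig \<phi> + Ig \<psi>)"
      using Lf_eq[OF c] by simp
    also have "\<dots> = (rdot Psi0 (\<phi> 0) + E * ell (Ig \<phi>)) + (rdot Psi0 (\<psi> 0) + E * ell (Ig \<psi>))"
      by (simp add: rdot_add linear_add[OF bounded_linear.linear[OF bl]] algebra_simps)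
    finally show ?thesis using Lf_eq[OF that(1)] Lf_eq[OF that(2)] by simp
  qed
  have Lf_0: "Lf (\<lambda>\<theta>. 0) = 0"
    using Lf_eq[of "\<lambda>\<theta>. 0"] by (simp add: Ig_def linear_0[OF bounded_linear.linear[OF bl]])
  have Lf_sum: "Lf (\<lambda>\<theta>. \<Sum>i\<in>I. f i \<theta>) = (\<Sum>i\<in>I. Lf (f i))"
    if "finite I" "\<And>i. continuous_on {-r..0} (f i)" for I and f :: "'i \<Rightarrow> real \<Rightarrow> complex^'n"
    using that(1)
  proof (induction I rule: finite_induct)
    case empty then show ?case by (simp add: Lf_0)
  next
    case (insert x F)
    have "Lf (\<lambda>\<theta>. \<Sum>i\<in>insert x F. f i \<theta>) = Lf (\<lambda>\<theta>. f x \<theta> + (\<Sum>i\<in>F. f i \<theta>))"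
      using insert by simp
    also have "\<dots> = Lf (f x) + Lf (\<lambda>\<theta>. \<Sum>i\<in>F. f i \<theta>)"
      by (rule Lf_add) (auto intro!: continuous_intros that(2))
    finally show ?case using insert by simp
  qed
  obtain K0 where K0: "\<And>v. norm (rdot Psi0 v) \<le> norm v * K0" "K0 > 0"
    using bounded_linear.pos_bounded[OF bl_rdot[of Psi0]] by blast
  obtain K1 where K1: "\<And>v. norm (ell v) \<le> norm v * K1" "K1 > 0"
    using bounded_linear.pos_bounded[OF bl] by blast
  have nex: "norm (ex \<theta>) = 1" for \<theta> by (simp add: ex_def norm_exp_eq_Re)
  have Lf_bd: "norm (Lf \<phi>) \<le> (K0 + K1 * r) * b"
    if c: "continuous_on {-r..0} \<phi>" and bd: "\<And>\<theta>. \<theta> \<in> {-r..0} \<Longrightarrow> norm (\<phi> \<theta>) \<le> b" for \<phi> b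
  proof -
    have b0: "norm (\<phi> 0) \<le> b" using bd[of 0] rpos by simp
    have "norm (Ig \<phi>) \<le> b * (0 - -r)" unfolding Ig_def
      by (rule integral_bound) (use rpos cont_smult[OF exc c] bd in \<open>auto simp: norm_smult_vec nex\<close>)
    then have "norm (ell (Ig \<phi>)) \<le> b * r * K1"
      using K1(1)[of "Ig \<phi>"] K1(2) by (smt (verit) mult_right_mono)
    moreover have "norm (rdot Psi0 (\<phi> 0)) \<le> b * K0"
      using K0(1)[of "\<phi> 0"] K0(2) b0 by (smt (verit) mult_right_mono)
    moreover have "norm E = 1" by (simp add: E_def nex)
    ultimately have "norm (rdot Psi0 (\<phi> 0) + E * ell (Ig \<phi>)) \<le> b * K0 + b * r * K1"
    proof -
      assume a1: "norm (ell (Ig \<phi>)) \<le> b * r * K1" and a2: "norm (rdot Psi0 (\<phi> 0)) \<le> b * K0" and a3: "norm E = 1"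
      have "norm (rdot Psi0 (\<phi> 0) + E * ell (Ig \<phi>)) \<le> norm (rdot Psi0 (\<phi> 0)) + norm (E * ell (Ig \<phi>))"
        by (rule norm_triangle_ineq)
      also have "norm (E * ell (Ig \<phi>)) = norm (ell (Ig \<phi>))" by (simp add: norm_mult a3)
      finally show ?thesis using a1 a2 by linarith
    qed
    then show ?thesis using Lf_eq[OF c] by (simp add: algebra_simps)
  qed
  have low: "Lf (wc j k) = 0" if "j + k < 2" for j k
  proof -
    have "Ig (wc j k) = integral {-r..0} (\<lambda>\<theta>. 0)"
      unfolding Ig_def by (rule Henstock_Kurzweil_Integration.integral_cong) (simp add: wcl[OF that])
    moreover have "wc j k 0 = 0" using wcl[OF that, of 0] rpos by simp
    ultimately show ?thesis using Lf_eq[OF wcc] by (simp add: linear_0[OF bounded_linear.linear[OF bl]])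
  qed
  define P where "P = (\<lambda>u \<theta>. \<Sum>j\<le>3. \<Sum>k\<le>3 - j. (u ^ j * cnj u ^ k / (fact j * fact k)) *s wc j k \<theta>)"
  have Pc: "continuous_on {-r..0} (P u)" for u
    unfolding P_def by (intro continuous_intros cont_smult wcc) 
  have LfP: "Lf (P u) = (\<Sum>j\<le>3. \<Sum>k\<le>3 - j. (u ^ j * cnj u ^ k / (fact j * fact k)) * Lf (wc j k))" for u
  proof -
    have "Lf (P u) = (\<Sum>j\<le>3. Lf (\<lambda>\<theta>. \<Sum>k\<le>3 - j. (u ^ j * cnj u ^ k / (fact j * fact k)) *s wc j k \<theta>))"
      unfolding P_def by (rule Lf_sum) (auto intro!: continuous_intros cont_smult wcc)
    also have "\<dots> = (\<Sum>j\<le>3. \<Sum>k\<le>3 - j. Lf (\<lambda>\<theta>. (u ^ j * cnj u ^ k / (fact j * fact k)) *s wc j k \<theta>))"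
      by (intro sum.cong refl Lf_sum) (auto intro!: continuous_intros cont_smult wcc)
    also have "\<dots> = (\<Sum>j\<le>3. \<Sum>k\<le>3 - j. (u ^ j * cnj u ^ k / (fact j * fact k)) * Lf (wc j k))"
      by (intro sum.cong refl Lf_smult wcc)
    finally show ?thesis .
  qed
  have "\<forall>\<^sub>F u in at 0. \<forall>\<theta>\<in>{-r..0}. norm (W u \<theta> - P u \<theta>) \<le> 1 * norm u ^ 3"
    using texp unfolding taylor_uubar_unif_def P_def by (meson zero_less_one)
  then obtain d where d: "d > 0" "\<And>u. u \<noteq> 0 \<Longrightarrow> dist u 0 < d \<Longrightarrow> \<forall>\<theta>\<in>{-r..0}. norm (W u \<theta> - P u \<theta>) \<le> 1 * norm u ^ 3"
    unfolding eventually_at by blast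
  show ?thesis
  proof (rule coeff_extract[where c = "\<lambda>j k. Lf (wc j k)" and d = "min d \<delta>" and K = "K0 + K1 * r"])
    show "Lf (wc 0 0) = 0" "Lf (wc 1 0) = 0" "Lf (wc 0 1) = 0" by (simp_all add: low)
    show "0 < min d \<delta>" using d dpos by simp
    fix u :: complex assume u: "0 < norm u" "norm u < min d \<delta>"
    have "Lf (\<lambda>\<theta>. W u \<theta> - P u \<theta>) = Lf (W u) - Lf (P u)"
      by (rule Lf_diff[OF Wcont Pc]) (use u in simp)
    also have "\<dots> = - (\<Sum>j\<le>3. \<Sum>k\<le>3 - j. (u ^ j * cnj u ^ k / (fact j * fact k)) * Lf (wc j k))"
      using WN[of u] u by (simp add: LfP)
    finally have eq: "Lf (\<lambda>\<theta>. W u \<theta> - P u \<theta>) = - (\<Sum>j\<le>3. \<Sum>k\<le>3 - j. (u ^ j * cnj u ^ k / (fact j * fact k)) * Lf (wc j k))" .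
    have "norm (Lf (\<lambda>\<theta>. W u \<theta> - P u \<theta>)) \<le> (K0 + K1 * r) * norm u ^ 3"
      by (rule Lf_bd) (use u d(2)[of u] Wcont[of u] Pc[of u] in \<open>auto intro!: continuous_intros\<close>)
    then show "norm (\<Sum>j\<le>3. \<Sum>k\<le>3 - j. (u ^ j * cnj u ^ k / (fact j * fact k)) * Lf (wc j k)) \<le> (K0 + K1 * r) * norm u ^ 3"
      unfolding eq by simp
  qed
qed
lemma chardiff_r:
  "charmat A B r l1 *v x - charmat A B r l2 *v x
     = (l1 - l2) *s x - (exp (- l1 * complex_of_real r) - exp (- l2 * complex_of_real r)) *s (cmat B *v x)"
proof -
  have d: "(\<Sum>j\<in>UNIV. (if k = j then c else 0) * x $ j) = c * x$k" for k and c :: complex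
  proof -
    have "(\<Sum>j\<in>UNIV. (if k = j then c else 0) * x $ j) = (\<Sum>j\<in>UNIV. if k = j then c * x $ j else 0)"
      by (rule sum.cong) auto
    then show ?thesis by simp
  qed
  have "(charmat A B r l1 *v x - charmat A B r l2 *v x) $ k
      = (\<Sum>j\<in>UNIV. (if k = j then l1 - l2 else 0) * x $ j - (exp (- l1 * complex_of_real r) - exp (- l2 * complex_of_real r)) * (cmat B $ k $ j * x$j))" for k
    unfolding matrix_vector_mult_def vec_lambda_beta vector_minus_component sum_subtractf[symmetric]
    by (rule sum.cong) (auto simp: charmat_def algebra_simps)
  also have "\<dots> k = (l1 - l2) * x$k - (exp (- l1 * complex_of_real r) - exp (- l2 * complex_of_real r)) * (\<Sum>j\<in>UNIV. cmat B $ k $ j * x$j)" for k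
    by (simp add: sum_subtractf d sum_distrib_left)
  finally show ?thesis
    by (simp add: vec_eq_iff matrix_vector_mult_def algebra_simps)
qed

lemma rdot_null: "(\<Sum>j\<in>UNIV. p$j *s M$j) = 0 \<Longrightarrow> rdot p (M *v x) = 0"
proof -
  assume h: "(\<Sum>j\<in>UNIV. p$j *s M$j) = 0"
  have "rdot p (M *v x) = (\<Sum>k\<in>UNIV. (\<Sum>j\<in>UNIV. p$j *s M$j) $ k * x $ k)"
    unfolding rdot_def matrix_vector_mult_def
    by (simp add: sum_component sum_distrib_left sum_distrib_right mult_ac) (rule sum.swap)
  then show ?thesis using h by simp
qed

lemma charmat_cnj:
  fixes A B :: "real^'n^'n"
  shows "charmat A B r (cnj l) *v vcnj x = vcnj (charmat A B r l *v x)"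
  by (simp add: vec_eq_iff matrix_vector_mult_def charmat_def vcnj_def cmat_def exp_cnj if_distrib[of cnj] cong: if_cong)

theorem proposition3p1:
  fixes f :: "(real^'n) \<times> (real^'n) \<Rightarrow> real^'n"
    and D :: "((real^'n) \<times> (real^'n)) set"
    and A B :: "real^'n^'n"
    and r \<omega> \<delta> :: real and k :: nat
    and phi0 psi0 :: "complex^'n"
    and w :: "complex \<Rightarrow> real \<Rightarrow> real^'n"
    and wc :: "nat \<Rightarrow> nat \<Rightarrow> real \<Rightarrow> complex^'n"
    and fc :: "nat \<Rightarrow> nat \<Rightarrow> complex^'n"
  assumes r_pos: "r > 0" and k_gt: "k > 3"
    and D_open: "open D" and D0: "(0, 0) \<in> D" and f0: "f (0, 0) = 0"
    and f_Ck: "Ck_on k D f"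
    and f_lin: "(f has_derivative (\<lambda>(x, y). A *v x + B *v y)) (at (0, 0))"
    and \<omega>_pos: "\<omega> > 0"
    and root_p: "charfun A B r (\<i> * complex_of_real \<omega>) = 0"
    and root_m: "charfun A B r (- \<i> * complex_of_real \<omega>) = 0"
    and simple_p: "deriv (charfun A B r) (\<i> * complex_of_real \<omega>) \<noteq> 0"
    and simple_m: "deriv (charfun A B r) (- \<i> * complex_of_real \<omega>) \<noteq> 0"
    and other_roots: "\<forall>lam. charfun A B r lam = 0 \<longrightarrow> lam \<noteq> \<i> * complex_of_real \<omega>
                        \<longrightarrow> lam \<noteq> - \<i> * complex_of_real \<omega> \<longrightarrow> Re lam < 0"
    and phi0_nz: "phi0 \<noteq> 0"
    and phi0_eig: "charmat A B r (\<i> * complex_of_real \<omega>) *v phi0 = 0"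
    and psi0_nz: "psi0 \<noteq> 0"
    and psi0_eig: "psi0 v* (- charmat A B r (\<i> * complex_of_real \<omega>)) = 0"
  defines "\<phi>1 \<equiv> \<lambda>s::real. exp (\<i> * complex_of_real \<omega> * complex_of_real s) *s phi0"
  defines "\<phi>2 \<equiv> \<lambda>s::real. vcnj (\<phi>1 s)"
  defines "Psi0 \<equiv> (1 / (rdot psi0 phi0 + rdot psi0 (cmat B *v phi0)
                     * exp (- \<i> * complex_of_real \<omega> * complex_of_real r) * complex_of_real r)) *s psi0"
  defines "\<Psi>1 \<equiv> \<lambda>z::real. exp (- \<i> * complex_of_real \<omega> * complex_of_real z) *s Psi0"
  defines "\<Phi> \<equiv> \<lambda>(u::complex) (\<theta>::real). rvec (u *s \<phi>1 \<theta> + cnj u *s \<phi>2 \<theta>) + w u \<theta>"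
  defines "fhat \<equiv> \<lambda>(x, y). f (x, y) - A *v x - B *v y"
  defines "g \<equiv> \<lambda>j k. rdot Psi0 (fc j k)"
  assumes \<delta>_pos: "\<delta> > 0"
    and w_cont: "\<forall>u. norm u < \<delta> \<longrightarrow> continuous_on {-r..0} (w u)"
    and w_in_N: "\<forall>u. norm u < \<delta> \<longrightarrow>
           bform B r \<Psi>1 (\<lambda>\<theta>. cvec (w u \<theta>)) = 0 \<and>
           bform B r (\<lambda>z. vcnj (\<Psi>1 z)) (\<lambda>\<theta>. cvec (w u \<theta>)) = 0"
    and w_invariant: "\<forall>u0. norm u0 < \<delta> \<longrightarrow>
           (\<exists>T>0. \<exists>x U. dde_solution f r D T x \<and>
              (\<forall>\<theta>\<in>{-r..0}. x \<theta> = \<Phi> u0 \<theta>) \<and>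
              (\<forall>t\<in>{0..T}. norm (U t) < \<delta> \<and> (\<forall>\<theta>\<in>{-r..0}. x (t + \<theta>) = \<Phi> (U t) \<theta>)))"
    and wc_cont: "\<forall>j k. continuous_on {-r..0} (wc j k)"
    and wc_low: "\<forall>j k. j + k < 2 \<longrightarrow> (\<forall>\<theta>\<in>{-r..0}. wc j k \<theta> = 0)"
    and w_exp: "taylor_uubar_unif 3 {-r..0} (\<lambda>u \<theta>. cvec (w u \<theta>)) wc"
    and f_exp: "taylor_uubar 3 (\<lambda>u. cvec (fhat (\<Phi> u 0, \<Phi> u (- r)))) fc"
  defines "E \<equiv> exp (- \<i> * complex_of_real \<omega> * complex_of_real r)"
  defines "I \<equiv> \<lambda>j k. integral {-r..0} (\<lambda>\<theta>. exp (- \<i> * complex_of_real \<omega> * complex_of_real \<theta>) *s wc j k \<theta>)"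
  defines "R1 \<equiv> (- g 2 1 * complex_of_real r * E) *s \<phi>1 0
        + (\<i> / (2 * complex_of_real \<omega>) * cnj (g 1 2)
             * (exp (\<i> * complex_of_real \<omega> * complex_of_real r) - E)) *s \<phi>2 0
        - (2 * g 1 1 * E) *s I 2 0
        - ((g 2 0 + 2 * cnj (g 1 1)) * E) *s I 1 1
        - (cnj (g 0 2) * E) *s I 0 2"
  defines "R2 \<equiv> g 2 1 *s \<phi>1 0 + cnj (g 1 2) *s \<phi>2 0 - fc 2 1
        + (2 * g 1 1) *s wc 2 0 0 + (g 2 0 + 2 * cnj (g 1 1)) *s wc 1 1 0
        + cnj (g 0 2) *s wc 0 2 0"
  shows "\<exists>X. charmat A B r (\<i> * complex_of_real \<omega>) *v X = cmat B *v R1 - R2"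
proof -
  define l0 where "l0 = \<i> * complex_of_real \<omega>"
  define M0 where "M0 = charmat A B r l0"
  have psinull: "(\<Sum>j\<in>UNIV. psi0$j *s M0$j) = 0"
  proof -
    have "(\<Sum>j\<in>UNIV. psi0$j *s M0$j) = - (psi0 v* (- M0))"
      by (simp add: vec_eq_iff vector_matrix_mult_def sum_component sum_negf mult.commute)
    then show ?thesis using psi0_eig by (simp add: M0_def l0_def)
  qed
  have lk: "\<exists>c. q = c *s psi0" if "(\<Sum>j\<in>UNIV. q$j *s M0$j) = 0" for q
    using left_kernel[OF simple_p psi0_nz] psinull that unfolding M0_def l0_def by blast
  define den where "den = rdot psi0 phi0 + rdot psi0 (cmat B *v phi0) * E * complex_of_real r"
  have den_ne: "den \<noteq> 0"
  proof -
    have "rdot psi0 phi0 + rdot psi0 (cmat B *v phi0) * exp (- l0 * complex_of_real r) * complex_of_real r \<noteq> 0"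
      by (rule den_nz[OF simple_p psi0_nz psinull[unfolded M0_def l0_def] phi0_nz phi0_eig, folded l0_def])
    moreover have "exp (- l0 * complex_of_real r) = E" by (simp add: E_def l0_def)
    ultimately show ?thesis by (simp add: den_def)
  qed
  have Psi0_eq: "Psi0 = (1/den) *s psi0" by (simp add: Psi0_def den_def E_def)
  define l where "l = (\<lambda>v. rdot Psi0 (cmat B *v v))"
  define pb where "pb = vcnj phi0"
  have l_add: "l (x + y) = l x + l y" for x y by (simp add: l_def matrix_vector_right_distrib rdot_add)
  have l_diff: "l (x - y) = l x - l y" for x y by (simp add: l_def matrix_vector_mult_diff_distrib rdot_diff)
  have l_smult: "l (c *s x) = c * l x" for c x by (simp add: l_def mv_smult rdot_smult)
  have F1: "rdot Psi0 phi0 = 1 - l phi0 * E * complex_of_real r"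
    using den_ne by (simp add: Psi0_eq l_def rdot_smult_left den_def field_simps)
  have F2: "rdot Psi0 pb = l pb * (exp (\<i> * complex_of_real \<omega> * complex_of_real r) - E) * (\<i> / (2 * complex_of_real \<omega>))"
  proof -
    have n1: "charmat A B r (- l0) *v pb = 0"
    proof -
      have "charmat A B r (cnj l0) *v vcnj phi0 = vcnj (charmat A B r l0 *v phi0)" by (rule charmat_cnj)
      moreover have "cnj l0 = - l0" by (simp add: l0_def)
      ultimately show ?thesis using phi0_eig by (simp add: pb_def l0_def vcnj_def vec_eq_iff)
    qed
    have "rdot psi0 (M0 *v pb) = 0" by (rule rdot_null[OF psinull])
    moreover have "M0 *v pb = (2 * l0) *s pb - (E - exp (\<i> * complex_of_real \<omega> * complex_of_real r)) *s (cmat B *v pb)"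
      using chardiff_r[of A B r l0 pb "- l0"] n1 unfolding M0_def
      by (simp add: E_def l0_def)
    ultimately have "2 * l0 * rdot psi0 pb - (E - exp (\<i> * complex_of_real \<omega> * complex_of_real r)) * rdot psi0 (cmat B *v pb) = 0"
      by (simp add: rdot_diff rdot_smult left_diff_distrib)
    then have "2 * l0 * rdot Psi0 pb - (E - exp (\<i> * complex_of_real \<omega> * complex_of_real r)) * l pb = 0"
      by (simp add: Psi0_eq l_def rdot_smult_left)
    then have h: "2 * l0 * rdot Psi0 pb = (E - exp (\<i> * complex_of_real \<omega> * complex_of_real r)) * l pb" by simp
    have l0n: "l0 \<noteq> 0" using \<omega>_pos by (simp add: l0_def)
    have "rdot Psi0 pb = (E - exp (\<i> * complex_of_real \<omega> * complex_of_real r)) * l pb / (2 * l0)"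
      using h l0n by (simp add: field_simps)
    also have "\<dots> = l pb * (exp (\<i> * complex_of_real \<omega> * complex_of_real r) - E) * (\<i> / (2 * complex_of_real \<omega>))"
      using \<omega>_pos by (simp add: l0_def field_simps)
    finally show ?thesis .
  qed
  have Wc: "continuous_on {-r..0} (\<lambda>\<theta>. cvec (w u \<theta>))" if "norm u < \<delta>" for u
    using w_cont that by (simp add: cont_cvec)
  have NC: "bform B r \<Psi>1 (wc 2 0) = 0 \<and> bform B r \<Psi>1 (wc 1 1) = 0 \<and> bform B r \<Psi>1 (wc 0 2) = 0"
    unfolding \<Psi>1_def
    by (rule N_coeffs[where W="\<lambda>u \<theta>. cvec (w u \<theta>)" and B=B and \<omega>=\<omega> and wc=wc and r=r and \<delta>=\<delta>, OF r_pos \<delta>_pos Wc])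
       (use w_in_N wc_cont wc_low w_exp in \<open>auto simp: \<Psi>1_def\<close>)
  have bf: "bform B r \<Psi>1 (wc j k) = rdot Psi0 (wc j k 0) + E * l (I j k)" for j k
    unfolding \<Psi>1_def E_def l_def I_def by (rule bform_Psi[OF wc_cont[rule_format]])
  have F3: "rdot Psi0 (wc 2 0 0) = - E * l (I 2 0)" "rdot Psi0 (wc 1 1 0) = - E * l (I 1 1)"
    "rdot Psi0 (wc 0 2 0) = - E * l (I 0 2)"
    using NC bf[of 2 0] bf[of 1 1] bf[of 0 2] by (simp_all add: eq_neg_iff_add_eq_0)
  have \<phi>10: "\<phi>1 0 = phi0" by (simp add: \<phi>1_def)
  have \<phi>20: "\<phi>2 0 = pb" by (simp add: \<phi>2_def \<phi>1_def pb_def)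
  have key: "rdot Psi0 (cmat B *v R1 - R2) = 0"
  proof -
    have "rdot Psi0 (cmat B *v R1 - R2) = l R1 - rdot Psi0 R2" by (simp add: rdot_diff l_def)
    also have "\<dots> = 0"
      unfolding R1_def R2_def
      by (simp add: l_add l_diff l_smult rdot_add rdot_diff rdot_smult \<phi>10 \<phi>20 F1 F2 F3 F3[unfolded One_nat_def] g_def algebra_simps diff_divide_distrib)
    finally show ?thesis .
  qed
  have "rdot psi0 (cmat B *v R1 - R2) = 0"
    using key den_ne by (simp add: Psi0_eq rdot_smult_left)
  then show ?thesis
    using range_from_left_kernel[of M0 psi0 "cmat B *v R1 - R2"] lk by (simp add: M0_def l0_def)
qed

end
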